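(* Let $V'$ be a $\mathbb{Z}$-graded vertex algebra and let $V$ be a $\mathbb{Z}$-graded vertex subalgebra of $V'$ such that $V=C_2(V)$. If $V'$ is completely reducible as a weak $V$-module, then $V'=C_2(V')$; in particular $V'$ is $C_2$-cofinite.
   Context: A $\mathbb{Z}$-graded vertex algebra is a vertex algebra $V=\bigoplus_{n\in\mathbb{Z}}V_n$ with a conformal vector $\omega\in V_2$ whose modes $L(n)$ satisfy the Virasoro relations, $L(0)|_{V_n}=n$, and $Y(L(-1)v,z)=\frac{d}{dz}Y(v,z)$. A vertex subalgebra is a subspace containing $\mathbf{1}$ that is itself a vertex algebra under the restricted operations. Modes: $Y(v,z)=\sum_nv_nz^{-n-1}$. $C_2(V)=\mathrm{Span}_{\mathbb{C}}\{u_{-2}v\mid u,v\in V\}$; $V$ is $C_2$-cofinite if $\dim V/C_2(V)<\infty$. A weak module is completely reducible if it is a direct sum of finitely many irreducible weak modules. *)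

theory Defs
  imports Complex_Main
begin

text \<open>A vertex algebra lives on a carrier subspace A of an ambient
complex vector space of type 'v, with scalar multiplication sc.
Modes: Y u n w is u_n w, i.e. Y(u,z) w = sum_n (Y u n w) z^(-n-1).\<close>

definition va_linear :: "(complex \<Rightarrow> 'v::ab_group_add \<Rightarrow> 'v) \<Rightarrow> 'v set
    \<Rightarrow> ('v \<Rightarrow> int \<Rightarrow> 'v \<Rightarrow> 'v) \<Rightarrow> bool" where
  "va_linear sc A Y \<longleftrightarrow>
     (\<forall>u\<in>A. \<forall>u'\<in>A. \<forall>w\<in>A. \<forall>w'\<in>A. \<forall>n. \<forall>c.
        Y u n (w + w') = Y u n w + Y u n w' \<and> Y u n (sc c w) = sc c (Y u n w) \<and>
        Y (u + u') n w = Y u n w + Y u' n w \<and> Y (sc c u) n w = sc c (Y u n w))"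

text \<open>Borcherds (Jacobi) identity, component form; all sums are finite by truncation,
  so we require the partial sums to agree for all sufficiently large cut-offs.\<close>
definition borcherds :: "(complex \<Rightarrow> 'v::ab_group_add \<Rightarrow> 'v) \<Rightarrow> 'v set
    \<Rightarrow> ('v \<Rightarrow> int \<Rightarrow> 'v \<Rightarrow> 'v) \<Rightarrow> bool" where
  "borcherds sc A Y \<longleftrightarrow>
     (\<forall>u\<in>A. \<forall>v\<in>A. \<forall>w\<in>A. \<forall>p q r :: int. \<exists>N::nat. \<forall>M\<ge>N.
        (\<Sum>i<M. sc (of_int p gchoose i) (Y (Y u (r + int i) v) (p + q - int i) w))
      = (\<Sum>i<M. sc ((-1) ^ i * (of_int r gchoose i))
            (Y u (p + r - int i) (Y v (q + int i) w)
             - sc (if even r then 1 else -1) (Y v (q + r - int i) (Y u (p + int i) w)))))"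

definition vertex_algebra_on :: "(complex \<Rightarrow> 'v::ab_group_add \<Rightarrow> 'v) \<Rightarrow> 'v set
    \<Rightarrow> ('v \<Rightarrow> int \<Rightarrow> 'v \<Rightarrow> 'v) \<Rightarrow> 'v \<Rightarrow> bool" where
  "vertex_algebra_on sc A Y vac \<longleftrightarrow>
     vector_space sc \<and> module.subspace sc A \<and> vac \<in> A \<and>
     (\<forall>u\<in>A. \<forall>n. \<forall>w\<in>A. Y u n w \<in> A) \<and>
     va_linear sc A Y \<and>
     (\<forall>u\<in>A. \<forall>w\<in>A. \<exists>N. \<forall>n\<ge>N. Y u n w = 0) \<and>
     (\<forall>w\<in>A. \<forall>n. Y vac n w = (if n = -1 then w else 0)) \<and>
     (\<forall>u\<in>A. Y u (-1) vac = u \<and> (\<forall>n\<ge>0. Y u n vac = 0)) \<and>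
     borcherds sc A Y"

definition Lop :: "('v \<Rightarrow> int \<Rightarrow> 'v \<Rightarrow> 'v) \<Rightarrow> 'v \<Rightarrow> int \<Rightarrow> 'v \<Rightarrow> 'v" where
  "Lop Y om n = Y om (n + 1)"

definition grade :: "(complex \<Rightarrow> 'v::ab_group_add \<Rightarrow> 'v) \<Rightarrow> 'v set
    \<Rightarrow> ('v \<Rightarrow> int \<Rightarrow> 'v \<Rightarrow> 'v) \<Rightarrow> 'v \<Rightarrow> int \<Rightarrow> 'v set" where
  "grade sc A Y om n = {v\<in>A. Lop Y om 0 v = sc (of_int n) v}"

definition graded_va_on :: "(complex \<Rightarrow> 'v::ab_group_add \<Rightarrow> 'v) \<Rightarrow> 'v set
    \<Rightarrow> ('v \<Rightarrow> int \<Rightarrow> 'v \<Rightarrow> 'v) \<Rightarrow> 'v \<Rightarrow> 'v \<Rightarrow> bool" where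
  "graded_va_on sc A Y vac om \<longleftrightarrow>
     vertex_algebra_on sc A Y vac \<and>
     om \<in> grade sc A Y om 2 \<and>
     (\<exists>c::complex. \<forall>m n. \<forall>w\<in>A.
        Lop Y om m (Lop Y om n w) - Lop Y om n (Lop Y om m w)
          = sc (of_int (m - n)) (Lop Y om (m + n) w)
            + (if m + n = 0 then sc ((of_int m ^ 3 - of_int m) / 12 * c) w else 0)) \<and>
     (\<forall>v\<in>A. \<forall>n. \<forall>w\<in>A. Y (Lop Y om (-1) v) n w = sc (- of_int n) (Y v (n - 1) w)) \<and>
     (\<forall>v\<in>A. \<exists>F f. finite F \<and> (\<forall>n\<in>F. f n \<in> grade sc A Y om n) \<and> v = (\<Sum>n\<in>F. f n))"

definition graded_subalgebra :: "(complex \<Rightarrow> 'v::ab_group_add \<Rightarrow> 'v) \<Rightarrow> 'v set \<Rightarrow> 'v set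
    \<Rightarrow> ('v \<Rightarrow> int \<Rightarrow> 'v \<Rightarrow> 'v) \<Rightarrow> 'v \<Rightarrow> bool" where
  "graded_subalgebra sc B A Y vac \<longleftrightarrow>
     B \<subseteq> A \<and> (\<exists>omB. graded_va_on sc B Y vac omB)"

definition C2 :: "(complex \<Rightarrow> 'v::ab_group_add \<Rightarrow> 'v) \<Rightarrow> 'v set
    \<Rightarrow> ('v \<Rightarrow> int \<Rightarrow> 'v \<Rightarrow> 'v) \<Rightarrow> 'v set" where
  "C2 sc A Y = module.span sc {Y u (-2) v | u v. u \<in> A \<and> v \<in> A}"

text \<open>dim A / C_2(A) finite: finitely many vectors together with C_2(A) span A.\<close>
definition C2_cofinite :: "(complex \<Rightarrow> 'v::ab_group_add \<Rightarrow> 'v) \<Rightarrow> 'v set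
    \<Rightarrow> ('v \<Rightarrow> int \<Rightarrow> 'v \<Rightarrow> 'v) \<Rightarrow> bool" where
  "C2_cofinite sc A Y \<longleftrightarrow> (\<exists>S. finite S \<and> S \<subseteq> A \<and> module.span sc (C2 sc A Y \<union> S) = A)"

definition submodule :: "(complex \<Rightarrow> 'v::ab_group_add \<Rightarrow> 'v) \<Rightarrow> 'v set \<Rightarrow> 'v set
    \<Rightarrow> ('v \<Rightarrow> int \<Rightarrow> 'v \<Rightarrow> 'v) \<Rightarrow> 'v set \<Rightarrow> bool" where
  "submodule sc B A Y W \<longleftrightarrow>
     W \<subseteq> A \<and> module.subspace sc W \<and> (\<forall>u\<in>B. \<forall>n. \<forall>w\<in>W. Y u n w \<in> W)"

definition irreducible_submodule :: "(complex \<Rightarrow> 'v::ab_group_add \<Rightarrow> 'v) \<Rightarrow> 'v set \<Rightarrow> 'v set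
    \<Rightarrow> ('v \<Rightarrow> int \<Rightarrow> 'v \<Rightarrow> 'v) \<Rightarrow> 'v set \<Rightarrow> bool" where
  "irreducible_submodule sc B A Y W \<longleftrightarrow>
     submodule sc B A Y W \<and> W \<noteq> {0} \<and>
     (\<forall>W'. submodule sc B A Y W' \<and> W' \<subseteq> W \<longrightarrow> W' = {0} \<or> W' = W)"

definition completely_reducible :: "(complex \<Rightarrow> 'v::ab_group_add \<Rightarrow> 'v) \<Rightarrow> 'v set \<Rightarrow> 'v set
    \<Rightarrow> ('v \<Rightarrow> int \<Rightarrow> 'v \<Rightarrow> 'v) \<Rightarrow> bool" where
  "completely_reducible sc B A Y \<longleftrightarrow>
     (\<exists>k::nat. \<exists>W :: nat \<Rightarrow> 'v set.
        (\<forall>i<k. irreducible_submodule sc B A Y (W i)) \<and>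
        module.span sc (\<Union>i<k. W i) = A \<and>
        (\<forall>i<k. W i \<inter> module.span sc (\<Union>j\<in>{..<k} - {i}. W j) = {0}))"

end

theory Submission
  imports Defs
begin

theorem proposition2p15:
  fixes sc :: "complex \<Rightarrow> 'v::ab_group_add \<Rightarrow> 'v"
    and Y :: "'v \<Rightarrow> int \<Rightarrow> 'v \<Rightarrow> 'v"
    and vac om :: 'v
    and V :: "'v set"
  assumes "graded_va_on sc UNIV Y vac om"
    and "graded_subalgebra sc V UNIV Y vac"
    and "V = C2 sc V Y"
    and "completely_reducible sc V UNIV Y"
  shows "UNIV = C2 sc UNIV Y \<and> C2_cofinite sc UNIV Y"
proof -
  have VA: "vertex_algebra_on sc UNIV Y vac" using assms(1) unfolding graded_va_on_def by blast
  then interpret vector_space sc unfolding vertex_algebra_on_def by blast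
  have lin: "va_linear sc UNIV Y" and bor: "borcherds sc UNIV Y"
    and vacid: "\<And>u. Y u (-1) vac = u"
    using VA unfolding vertex_algebra_on_def by auto
  have der: "\<And>v n w. Y (Lop Y om (-1) v) n w = sc (- of_int n) (Y v (n - 1) w)"
    using assms(1) unfolding graded_va_on_def by blast
  define G where "G = {Y u (-2) v | u v. u \<in> (UNIV::'v set) \<and> v \<in> UNIV}"
  define C where "C = span G"
  have CC: "C2 sc UNIV Y = C" unfolding C_def G_def C2_def by simp
  have neg: "\<forall>x c. Y x (- int m) c \<in> C" if "m \<ge> 2" for m
    using that
  proof (induction m rule: dec_induct)
    case base
    show ?case unfolding C_def G_def by (auto intro: span_base)
  next
    case (step m)
    show ?case
    proof (intro allI)
      fix x c
      have "Y (Lop Y om (-1) x) (- int m) c = sc (of_nat m) (Y x (- int m - 1) c)"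
        using der[of x "- int m" c] by simp
      hence "sc (1 / of_nat m) (Y (Lop Y om (-1) x) (- int m) c) = Y x (- int m - 1) c"
        using step(1) by simp
      moreover have "sc (1 / of_nat m) (Y (Lop Y om (-1) x) (- int m) c) \<in> C"
        using step(3) unfolding C_def by (blast intro: span_scale)
      ultimately have h: "Y x (- int m - 1) c \<in> C" by simp
      have e: "- int (Suc m) = - int m - 1" by simp
      show "Y x (- int (Suc m)) c \<in> C" unfolding e by (rule h)
    qed
  qed
  have key: "Y a (-1) (Y b (-2) c) \<in> C" for a b c
  proof -
    obtain N where hN: "\<forall>M\<ge>N.
        (\<Sum>i<M. sc (of_int (-1) gchoose i) (Y (Y a (0 + int i) b) ((-1) + (-2) - int i) c))
      = (\<Sum>i<M. sc ((-1) ^ i * (of_int 0 gchoose i))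
            (Y a ((-1) + 0 - int i) (Y b ((-2) + int i) c)
             - sc (if even (0::int) then 1 else -1) (Y b ((-2) + 0 - int i) (Y a ((-1) + int i) c))))"
      using bor unfolding borcherds_def by blast
    define M where "M = max N 1"
    have e: "(\<Sum>i<M. sc (of_int (-1) gchoose i) (Y (Y a (0 + int i) b) ((-1) + (-2) - int i) c))
      = (\<Sum>i<M. sc ((-1) ^ i * (of_int 0 gchoose i))
            (Y a ((-1) + 0 - int i) (Y b ((-2) + int i) c)
             - sc (if even (0::int) then 1 else -1) (Y b ((-2) + 0 - int i) (Y a ((-1) + int i) c))))"
      using hN M_def by simp
    have "(\<Sum>i<M. sc (of_int (-1) gchoose i) (Y (Y a (0 + int i) b) ((-1) + (-2) - int i) c)) \<in> C"
      unfolding C_def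
    proof (rule span_sum)
      fix i
      have "(-1) + (-2) - int i = - int (3 + i)" by simp
      hence "Y (Y a (0 + int i) b) ((-1) + (-2) - int i) c \<in> C" using neg[of "3+i"] by simp
      thus "sc (of_int (-1) gchoose i) (Y (Y a (0 + int i) b) ((-1) + (-2) - int i) c) \<in> span G"
        unfolding C_def by (rule span_scale)
    qed
    moreover have "(\<Sum>i<M. sc ((-1) ^ i * (of_int 0 gchoose i))
            (Y a ((-1) + 0 - int i) (Y b ((-2) + int i) c)
             - sc (if even (0::int) then 1 else -1) (Y b ((-2) + 0 - int i) (Y a ((-1) + int i) c))))
       = (\<Sum>i<M. if i = 0 then Y a (-1) (Y b (-2) c) - Y b (-2) (Y a (-1) c) else 0)"
      by (rule sum.cong) (auto simp: gbinomial_0_left)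
    moreover have "0 < M" using M_def by simp
    ultimately have "Y a (-1) (Y b (-2) c) - Y b (-2) (Y a (-1) c) \<in> C" using e by simp
    moreover have "Y b (-2) (Y a (-1) c) \<in> C" unfolding C_def G_def by (auto intro: span_base)
    ultimately have "(Y a (-1) (Y b (-2) c) - Y b (-2) (Y a (-1) c)) + Y b (-2) (Y a (-1) c) \<in> C"
      unfolding C_def by (rule span_add)
    thus ?thesis by simp
  qed
  have vacC: "vac \<in> C"
  proof -
    obtain omB where "graded_va_on sc V Y vac omB" using assms(2) unfolding graded_subalgebra_def by blast
    hence "vac \<in> V" unfolding graded_va_on_def vertex_algebra_on_def by blast
    hence "vac \<in> C2 sc V Y" using assms(3) by simp
    thus ?thesis unfolding C2_def C_def G_def using span_mono[of "{Y u (-2) v | u v. u \<in> V \<and> v \<in> V}" "{Y u (-2) v | u v. u \<in> (UNIV::'v set) \<and> v \<in> UNIV}"] by blast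
  qed
  have all: "w \<in> C" for w
  proof -
    have sub: "subspace {x. Y w (-1) x \<in> C}"
    proof -
      have add: "Y w (-1) (x + y) = Y w (-1) x + Y w (-1) y" for x y using lin unfolding va_linear_def by blast
      have scl: "Y w (-1) (sc k x) = sc k (Y w (-1) x)" for k x using lin unfolding va_linear_def by blast
      have z: "Y w (-1) 0 = 0" using add[of 0 0] by simp
      show ?thesis unfolding subspace_def
      proof (intro conjI ballI allI)
        show "0 \<in> {x. Y w (-1) x \<in> C}" using z by (simp add: C_def span_zero)
      next
        fix x y assume "x \<in> {x. Y w (-1) x \<in> C}" "y \<in> {x. Y w (-1) x \<in> C}"
        thus "x + y \<in> {x. Y w (-1) x \<in> C}" unfolding mem_Collect_eq add C_def by (rule span_add)
      next
        fix k x assume "x \<in> {x. Y w (-1) x \<in> C}"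
        thus "sc k x \<in> {x. Y w (-1) x \<in> C}" unfolding mem_Collect_eq scl C_def by (rule span_scale)
      qed
    qed
    have "G \<subseteq> {x. Y w (-1) x \<in> C}" unfolding G_def using key by auto
    hence "C \<subseteq> {x. Y w (-1) x \<in> C}" unfolding C_def by (rule span_minimal[OF _ sub[unfolded C_def]])
    hence "Y w (-1) vac \<in> C" using vacC by blast
    thus ?thesis using vacid by simp
  qed
  hence U: "UNIV = C2 sc UNIV Y" unfolding CC by blast
  moreover have "C2_cofinite sc UNIV Y" unfolding C2_cofinite_def
  proof (rule exI[of _ "{}"])
    have "module.span sc (C2 sc UNIV Y \<union> {}) = module.span sc UNIV" using U by simp
    thus "finite {} \<and> {} \<subseteq> UNIV \<and> module.span sc (C2 sc UNIV Y \<union> {}) = UNIV" by simp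
  qed
  ultimately show ?thesis by blast
qed

end
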